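(* Let $A>0$ be fixed. For $X$ large set $\rho=e^{-1/X}$, $Q=(\log X)^A$ and $\delta_q=q^{-1}X^{-1}(\log X)^A$. For $1\le a\le q\le Q$ with $(a,q)=1$ let $\mathfrak{M}(q,a)=\big(\frac aq-\delta_q,\frac aq+\delta_q\big)$, let $\mathfrak{M}$ be the union of all these intervals, and let $\mathfrak{m}=[-\frac12,\frac12)\setminus\mathfrak{M}$ (arcs understood modulo $1$). Then for $\theta\in\mathfrak{m}$, \[ \Phi_{|\mu|}(\rho\operatorname{e}(\theta))\ll_A X(\log X)^{10-A/4}. \]
   Context: $\operatorname{e}(x)=\exp(2\pi i x)$; $\mu$ is the Möbius function; for $|z|<1$, $\Phi_{|\mu|}(z):=\sum_{j=1}^\infty\sum_{n=1}^\infty\frac{|\mu(n)|}{j}z^{jn}$ (so that $\prod_{n\ge1}(1-z^n)^{-|\mu(n)|}=\exp(\Phi_{|\mu|}(z))$). $\ll_A$ means the implied constant may depend on $A$. *)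

theory Defs
  imports "HOL-Analysis.Analysis" "HOL-Computational_Algebra.Squarefree"
begin

definition ee :: "real \<Rightarrow> complex" where
  "ee x = exp (2 * of_real pi * \<i> * of_real x)"

definition moebius :: "nat \<Rightarrow> int" where
  "moebius n = (if n = 0 then 0 else if squarefree n then (-1) ^ card (prime_factors n) else 0)"

definition Phi_absmu :: "complex \<Rightarrow> complex" where
  "Phi_absmu z = (\<Sum>j. \<Sum>n. of_int \<bar>moebius (Suc n)\<bar> / of_nat (Suc j) * z ^ (Suc j * Suc n))"

definition delta_q :: "real \<Rightarrow> real \<Rightarrow> nat \<Rightarrow> real" where
  "delta_q A X q = (ln X) powr A / (real q * X)"

definition major_arcs :: "real \<Rightarrow> real \<Rightarrow> real set" where
  "major_arcs A X = {\<theta>. \<exists>q a (k::int). 1 \<le> a \<and> a \<le> q \<and> real q \<le> (ln X) powr A \<and> coprime a q \<and>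
      \<bar>\<theta> - real a / real q - of_int k\<bar> < delta_q A X q}"

definition minor_arcs :: "real \<Rightarrow> real \<Rightarrow> real set" where
  "minor_arcs A X = {-1/2..<1/2} - major_arcs A X"

end

theory Submission
  imports Defs "HOL-Real_Asymp.Real_Asymp"
begin

lemma moebius_mult_prime:
  assumes "prime p" "squarefree d" "\<not> p dvd d"
  shows "moebius (d * p) = - moebius d"
proof -
  have d0: "d \<noteq> 0" using assms(2) by (cases "d = 0") (simp_all add: not_squarefree_0)
  have p0: "p \<noteq> 0" using assms(1) by auto
  have cop: "coprime d p" using prime_imp_coprime[OF assms(1), of d] assms(3) by (simp add: coprime_commute)
  have sq: "squarefree (d*p)" using squarefree_mult_coprime[OF cop assms(2) squarefree_prime[OF assms(1)]] .
  have pf: "prime_factors (d*p) = insert p (prime_factors d)"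
    using prime_factors_product[OF d0 p0] assms(1) by (simp add: prime_prime_factors)
  have "p \<notin> prime_factors d" using assms(3) by auto
  then have "card (prime_factors (d*p)) = Suc (card (prime_factors d))"
    by (simp add: pf)
  then show ?thesis using sq assms d0 p0 by (simp add: moebius_def)
qed

lemma moebius_sum_sq:
  assumes "n > 0"
  shows "(\<Sum>d\<in>{d. 0 < d \<and> d\<^sup>2 dvd n}. moebius d) = \<bar>moebius n\<bar>"
proof (cases "squarefree n")
  case True
  have "{d. 0 < d \<and> d\<^sup>2 dvd n} = {1}"
    proof (intro equalityI subsetI)
    fix d assume "d \<in> {d. 0 < d \<and> d\<^sup>2 dvd n}"
    then have "d dvd 1" using squarefreeD[OF True] by auto
    then show "d \<in> {1}" by simp
  qed simp
  then show ?thesis using True assms by (simp add: moebius_def)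
next
  case False
  then obtain p where p: "prime p" "p\<^sup>2 dvd n"
    using squarefree_factorial_semiring assms by auto
  define D where "D = {d. 0 < d \<and> d\<^sup>2 dvd n}"
  have finD: "finite D"
  proof (rule finite_subset[of _ "{..n}"])
    show "D \<subseteq> {..n}"
    proof
      fix d assume "d \<in> D"
      then have "d\<^sup>2 dvd n" "0 < d" by (auto simp: D_def)
      then have "d\<^sup>2 \<le> n" using assms dvd_imp_le by blast
      moreover have "d \<le> d\<^sup>2" using \<open>0 < d\<close> by (simp add: power2_eq_square)
      ultimately show "d \<in> {..n}" by simp
    qed
  qed simp
  define D0 where "D0 = {d\<in>D. squarefree d \<and> \<not> p dvd d}"
  define D1 where "D1 = {d\<in>D. squarefree d \<and> p dvd d}"
  define D2 where "D2 = {d\<in>D. \<not> squarefree d}"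
  have split: "D = D0 \<union> D1 \<union> D2" by (auto simp: D0_def D1_def D2_def)
  have "sum moebius D2 = 0" by (rule sum.neutral) (auto simp: D2_def moebius_def)
  have img: "D1 = (\<lambda>d. d * p) ` D0"
  proof
    show "(\<lambda>d. d * p) ` D0 \<subseteq> D1"
    proof
      fix e assume "e \<in> (\<lambda>d. d * p) ` D0"
      then obtain d where d: "d \<in> D0" "e = d * p" by auto
      have cop: "coprime d p" using prime_imp_coprime[OF p(1), of d] d by (auto simp: D0_def coprime_commute)
      have "d\<^sup>2 dvd n" "0 < d" using d by (auto simp: D0_def D_def)
      moreover have "coprime (d\<^sup>2) (p\<^sup>2)" using cop by simp
      ultimately have "d\<^sup>2 * p\<^sup>2 dvd n" using p divides_mult by blast
      then have "(d*p)\<^sup>2 dvd n" by (simp add: power_mult_distrib)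
      moreover have "squarefree (d*p)"
        using squarefree_mult_coprime[OF cop _ squarefree_prime[OF p(1)]] d by (auto simp: D0_def)
      moreover have "0 < d * p" using \<open>0 < d\<close> p prime_gt_0_nat by simp
      ultimately show "e \<in> D1" using d by (auto simp: D1_def D_def)
    qed
  next
    show "D1 \<subseteq> (\<lambda>d. d * p) ` D0"
    proof
      fix e assume e: "e \<in> D1"
      then obtain d where d: "e = d * p" by (auto simp: D1_def dvd_def mult.commute)
      have sq: "squarefree e" "0 < e" "e\<^sup>2 dvd n" using e by (auto simp: D1_def D_def)
      have "\<not> p dvd d"
      proof
        assume "p dvd d"
        then have "p\<^sup>2 dvd e" using d by (auto simp: power2_eq_square)
        then show False using squarefreeD[OF sq(1) \<open>p\<^sup>2 dvd e\<close>] p(1) not_prime_unit by blast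
      qed
      moreover have "squarefree d" using sq d squarefree_multD by blast
      moreover have "0 < d" using sq d by simp
      moreover have "d\<^sup>2 dvd e\<^sup>2" using d by (simp add: power_mult_distrib)
      then have "d\<^sup>2 dvd n" using sq dvd_trans by blast
      ultimately show "e \<in> (\<lambda>d. d * p) ` D0" using d by (auto simp: D0_def D_def)
    qed
  qed
  have inj: "inj_on (\<lambda>d. d * p) D0" using p by (auto simp: inj_on_def prime_gt_0_nat)
  have "sum moebius D1 = sum (\<lambda>d. moebius (d * p)) D0"
    by (simp add: img sum.reindex[OF inj])
  also have "\<dots> = sum (\<lambda>d. - moebius d) D0"
    by (rule sum.cong) (auto simp: D0_def moebius_mult_prime p)
  finally have s1: "sum moebius D1 = - sum moebius D0" by (simp add: sum_negf)
  have "sum moebius D = sum moebius D0 + sum moebius D1 + sum moebius D2"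
    proof -
    have f0: "finite D0" "finite D1" "finite D2" using finD by (auto simp: D0_def D1_def D2_def)
    have "sum moebius D = sum moebius (D0 \<union> D1) + sum moebius D2"
      unfolding split by (rule sum.union_disjoint) (use f0 in \<open>auto simp: D0_def D1_def D2_def\<close>)
    also have "sum moebius (D0 \<union> D1) = sum moebius D0 + sum moebius D1"
      by (rule sum.union_disjoint) (use f0 in \<open>auto simp: D0_def D1_def\<close>)
    finally show ?thesis .
  qed
  then have "sum moebius D = 0" using s1 \<open>sum moebius D2 = 0\<close> by simp
  then show ?thesis using False by (simp add: D_def moebius_def)
qed

lemma abs_moebius_le: "\<bar>moebius n\<bar> \<le> 1"
  by (simp add: moebius_def)

lemma fin_sqdiv: "n > 0 \<Longrightarrow> finite {d::nat. 0 < d \<and> d\<^sup>2 dvd n}"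
proof (rule finite_subset[of _ "{..n}"])
  assume n: "n > 0"
  show "{d::nat. 0 < d \<and> d\<^sup>2 dvd n} \<subseteq> {..n}"
  proof
    fix d assume "d \<in> {d::nat. 0 < d \<and> d\<^sup>2 dvd n}"
    then have "d\<^sup>2 dvd n" "0 < d" by auto
    then have "d\<^sup>2 \<le> n" using n dvd_imp_le by blast
    moreover have "d \<le> d\<^sup>2" using \<open>0 < d\<close> by (simp add: power2_eq_square)
    ultimately show "d \<in> {..n}" by simp
  qed
qed simp

lemma T_identity:
  fixes w :: complex
  assumes w: "norm w < 1"
  shows "((\<lambda>d. of_int (moebius d) * (w^(d\<^sup>2) / (1 - w^(d\<^sup>2)))) has_sum
           (\<Sum>n. of_int \<bar>moebius (Suc n)\<bar> * w^(Suc n))) {1..}"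
proof -
  define r where "r = norm w"
  have r0: "0 \<le> r" and r1: "r < 1" using w by (auto simp: r_def)
  define f :: "nat \<times> nat \<Rightarrow> complex" where "f = (\<lambda>(d,m). of_int (moebius d) * w^(d\<^sup>2*m))"
  define I where "I = Sigma {1::nat..} (\<lambda>_. {1::nat..})"
  define g :: "nat \<times> nat \<Rightarrow> real" where "g = (\<lambda>(d,m). (r^d)^m)"
  have rd1: "r^d < 1" if "d \<ge> 1" for d :: nat
    using r0 r1 that by (simp add: power_less_one_iff)
  have g_sum: "g summable_on I"
    unfolding I_def
  proof (rule summable_on_SigmaI[where g = "\<lambda>d. r^d / (1 - r^d)"])
    fix d :: nat assume d: "d \<in> {1..}"
    show "((\<lambda>m. g (d, m)) has_sum r ^ d / (1 - r ^ d)) {1..}"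
      unfolding g_def using has_sum_geometric_from_1[of "r^d"] rd1[of d] d r0 by simp
  next
    have "((\<lambda>d. r^d / (1 - r)) has_sum (r / (1 - r) / (1 - r))) {1..}"
      using has_sum_divide_const[OF has_sum_geometric_from_1[of r]] r0 r1 by simp
    then have "(\<lambda>d. r^d / (1 - r)) summable_on {1..}" by (rule has_sum_imp_summable)
    then show "(\<lambda>d. r ^ d / (1 - r ^ d)) summable_on {1..}"
    proof (rule summable_on_comparison_test)
      fix d :: nat assume d: "d \<in> {1..}"
      have "r^d \<le> r" using power_decreasing[of 1 d r] r0 r1 d by simp
      then show "r ^ d / (1 - r ^ d) \<le> r ^ d / (1 - r)"
        using r0 r1 rd1[of d] d by (intro divide_left_mono) auto
      show "0 \<le> r ^ d / (1 - r ^ d)" using r0 rd1[of d] d by simp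
    qed
  next
    fix d m :: nat show "0 \<le> g (d, m)" using r0 by (simp add: g_def)
  qed
  have f_sum: "f summable_on I"
  proof (rule Infinite_Sum.abs_summable_summable)
    show "(\<lambda>x. norm (f x)) summable_on I"
    proof (rule Infinite_Sum.abs_summable_on_comparison_test'[OF g_sum])
      fix x assume x: "x \<in> I"
      obtain d m where x': "x = (d, m)" by fastforce
      have "norm (f x) = of_int \<bar>moebius d\<bar> * r^(d\<^sup>2*m)"
        by (simp add: f_def x' norm_mult norm_power r_def)
      also have "\<dots> \<le> 1 * r^(d\<^sup>2*m)"
        using abs_moebius_le[of d] r0 by (intro mult_right_mono) auto
      also have "\<dots> \<le> r^(d*m)"
        using r0 r1 x by (auto simp: x' I_def power2_eq_square intro!: power_decreasing)
      also have "\<dots> = g x" by (simp add: g_def x' power_mult)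
      finally show "norm (f x) \<le> g x" .
    qed
  qed
  define S where "S = infsum f I"
  have fS: "(f has_sum S) I" using f_sum by (simp add: S_def has_sum_infsum)
  have A: "((\<lambda>d. of_int (moebius d) * (w^(d\<^sup>2) / (1 - w^(d\<^sup>2)))) has_sum S) {1..}"
  proof (rule has_sum_Sigma'[OF fS[unfolded I_def]])
    fix d :: nat assume d: "d \<in> {1..}"
    have nv: "norm (w^(d\<^sup>2)) < 1"
      using r0 r1 d by (simp add: norm_power r_def[symmetric] power_less_one_iff)
    show "((\<lambda>m. f (d, m)) has_sum of_int (moebius d) * (w ^ d\<^sup>2 / (1 - w ^ d\<^sup>2))) {1..}"
      unfolding f_def using has_sum_cmult_right[OF has_sum_geometric_from_1[OF nv], of "of_int (moebius d)"]
      by (simp add: power_mult)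
  qed
  define F where "F = (\<lambda>n::nat. {d::nat. 0 < d \<and> d\<^sup>2 dvd n})"
  define J where "J = Sigma {1::nat..} F"
  have B: "((\<lambda>(n,d). of_int (moebius d) * w^n) has_sum S) J"
  proof -
    have "(f has_sum S) I = ((\<lambda>(n,d). of_int (moebius d) * w^n) has_sum S) J"
    proof (rule has_sum_reindex_bij_witness[where i = "\<lambda>(n,d). (d, n div d\<^sup>2)" and j = "\<lambda>(d,m). (d\<^sup>2*m, d)"])
      fix a assume "a \<in> I" then show "(case case a of (d, m) \<Rightarrow> (d\<^sup>2 * m, d) of (n, d) \<Rightarrow> (d, n div d\<^sup>2)) = a"
        by (auto simp: I_def)
    next
      fix a assume "a \<in> I" then show "(case a of (d, m) \<Rightarrow> (d\<^sup>2 * m, d)) \<in> J"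
        by (auto simp: I_def J_def F_def)
    next
      fix b assume "b \<in> J" then show "(case case b of (n, d) \<Rightarrow> (d, n div d\<^sup>2) of (d, m) \<Rightarrow> (d\<^sup>2 * m, d)) = b"
        by (auto simp: J_def F_def)
    next
      fix b assume b: "b \<in> J"
      obtain n d where b': "b = (n, d)" by fastforce
      have "d\<^sup>2 dvd n" "0 < d" "1 \<le> n" using b by (auto simp: J_def F_def b')
      then obtain k where k: "n = d\<^sup>2 * k" by (auto elim: dvdE)
      then have "k \<noteq> 0" using \<open>1 \<le> n\<close> by auto
      then have "n div d\<^sup>2 \<ge> 1" using k \<open>0 < d\<close> by simp
      then show "(case b of (n, d) \<Rightarrow> (d, n div d\<^sup>2)) \<in> I" using \<open>0 < d\<close> by (auto simp: I_def b')
    next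
      fix a assume "a \<in> I" then show "(case case a of (d, m) \<Rightarrow> (d\<^sup>2 * m, d) of (n, d) \<Rightarrow> of_int (moebius d) * w ^ n) = f a"
        by (cases a) (simp add: f_def)
    qed simp
    then show ?thesis using fS by simp
  qed
  have C: "((\<lambda>n. of_int \<bar>moebius n\<bar> * w^n) has_sum S) {1..}"
  proof -
    have "((\<lambda>n. of_int (\<Sum>d\<in>F n. moebius d) * w^n) has_sum S) {1..}"
    proof (rule has_sum_Sigma'[OF B[unfolded J_def]])
      fix n :: nat assume n: "n \<in> {1..}"
      have "finite (F n)" using fin_sqdiv[of n] n by (simp add: F_def)
      then show "((\<lambda>d. case (n, d) of (n, d) \<Rightarrow> of_int (moebius d) * w ^ n) has_sum of_int (sum moebius (F n)) * w ^ n) (F n)"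
        by (simp add: has_sum_finiteI sum_distrib_right)
    qed
    moreover have "\<And>n. n \<in> {1..} \<Longrightarrow> (\<Sum>d\<in>F n. moebius d) = \<bar>moebius n\<bar>"
      using moebius_sum_sq by (simp add: F_def)
    ultimately show ?thesis
      by (subst (asm) has_sum_cong[where g = "\<lambda>n. of_int \<bar>moebius n\<bar> * w^n"]) auto
  qed
  have "((\<lambda>n. of_int \<bar>moebius (Suc n)\<bar> * w^(Suc n)) has_sum S) UNIV"
  proof -
    have "((\<lambda>n. of_int \<bar>moebius (Suc n)\<bar> * w^(Suc n)) has_sum S) UNIV = ((\<lambda>n. of_int \<bar>moebius n\<bar> * w^n) has_sum S) {1..}"
      by (rule has_sum_reindex_bij_witness[where i = "\<lambda>n. n - 1" and j = Suc]) auto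
    then show ?thesis using C by simp
  qed
  then have "(\<Sum>n. of_int \<bar>moebius (Suc n)\<bar> * w^(Suc n)) = S"
    using has_sum_imp_sums sums_unique by metis
  then show ?thesis using A by simp
qed

lemma sin_lower: fixes x :: real assumes "\<bar>x\<bar> \<le> 2" shows "\<bar>x\<bar> / 3 \<le> \<bar>sin x\<bar>"
proof -
  have s: "(\<Sum>m<3. sin_coeff m * x^m) = x"
    by (simp add: sin_coeff_def eval_nat_numeral)
  have b: "\<bar>sin x - x\<bar> \<le> inverse (fact 3) * \<bar>x\<bar>^3"
    using Maclaurin_sin_bound[of x 3] by (simp add: s)
  have "\<bar>x\<bar>^3 = \<bar>x\<bar> * \<bar>x\<bar>^2" by (simp add: power3_eq_cube power2_eq_square)
  also have "\<dots> \<le> \<bar>x\<bar> * 4"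
  proof (intro mult_left_mono)
    have "\<bar>x\<bar>^2 \<le> 2^2" using assms by (intro power_mono) auto
    then show "\<bar>x\<bar>^2 \<le> 4" by simp
  qed simp
  finally have "\<bar>x\<bar>^3 \<le> 4 * \<bar>x\<bar>" by simp
  then have "\<bar>sin x - x\<bar> \<le> 4 * \<bar>x\<bar> / 6" using b by (simp add: fact_numeral)
  then show ?thesis by linarith
qed

lemma norm_ee [simp]: "norm (ee x) = 1"
  by (simp add: ee_def)

lemma ee_int: "ee (x + of_int k) = ee x"
proof -
  have "2 * of_real pi * \<i> * of_real (x + of_int k) = 2 * of_real pi * \<i> * of_real x + of_int k * (2 * of_real pi * \<i>)"
    by (simp add: algebra_simps)
  then have "ee (x + of_int k) = ee x * exp (of_int k * (2 * of_real pi * \<i>))"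
    by (simp add: ee_def exp_add)
  also have "exp (of_int k * (2 * of_real pi * \<i>)) = 1"
    by (simp add: exp_eq_1) 
  finally show ?thesis by simp
qed

lemma ee_power: "ee x ^ m = ee (real m * x)"
  by (simp add: ee_def exp_of_nat_mult[symmetric] algebra_simps)

lemma norm_one_minus_ee:
  assumes t0: "exp (-1) \<le> t" and psi: "\<bar>\<psi>\<bar> \<le> 1/2"
  shows "\<bar>\<psi>\<bar> \<le> norm (1 - of_real t * ee \<psi>)"
proof -
  define a where "a = pi * \<psi>"
  have ee: "ee \<psi> = Complex (cos (2*a)) (sin (2*a))"
    by (simp add: ee_def a_def exp_eq_polar cis_conv_exp[symmetric] mult.assoc complex_eq_iff)
  have "1 - of_real t * ee \<psi> = Complex (1 - t * cos (2*a)) (- (t * sin (2*a)))"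
    by (simp add: ee complex_eq_iff)
  then have "(norm (1 - of_real t * ee \<psi>))^2 = (1 - t * cos (2*a))^2 + (t * sin (2*a))^2"
    by (simp add: cmod_power2)
  also have "\<dots> = 1 - 2 * t * cos (2*a) + t^2 * ((sin (2*a))^2 + (cos (2*a))^2)"
    by (simp only: power2_eq_square algebra_simps)
  also have "\<dots> = 1 - 2 * t * (1 - 2 * (sin a)^2) + t^2"
    by (simp only: sin_cos_squared_add mult_1_right) (simp only: cos_double_sin)
  also have "\<dots> = (1 - t)^2 + 4 * t * (sin a)^2"
    by (simp add: power2_eq_square algebra_simps)
  finally have n2: "(norm (1 - of_real t * ee \<psi>))^2 = (1 - t)^2 + 4 * t * (sin a)^2" .
  have "pi * \<bar>\<psi>\<bar> \<le> pi * (1/2)" using psi by (intro mult_left_mono) auto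
  moreover have "\<bar>a\<bar> = pi * \<bar>\<psi>\<bar>" by (simp add: a_def abs_mult)
  ultimately have "\<bar>a\<bar> \<le> 2" using pi_less_4 by linarith
  then have "\<bar>a\<bar> / 3 \<le> \<bar>sin a\<bar>" by (rule sin_lower)
  moreover have "\<bar>\<psi>\<bar> \<le> \<bar>a\<bar> / 3"
  proof -
    have "3 * \<bar>\<psi>\<bar> \<le> pi * \<bar>\<psi>\<bar>" using pi_gt3 by (intro mult_right_mono) auto
    then show ?thesis by (simp add: a_def abs_mult)
  qed
  ultimately have "\<bar>\<psi>\<bar> \<le> \<bar>sin a\<bar>" by linarith
  then have "\<bar>\<psi>\<bar>^2 \<le> \<bar>sin a\<bar>^2" by (intro power_mono) auto
  then have "\<psi>^2 \<le> (sin a)^2" by simp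
  moreover have "1 \<le> 4 * t"
  proof -
    have "exp 1 \<le> (4::real)" using exp_le by simp
    then have "1/4 \<le> exp (-1::real)" by (simp add: exp_minus field_simps)
    then show ?thesis using t0 by simp
  qed
  ultimately have "1 * \<psi>^2 \<le> (4 * t) * (sin a)^2"
    by (intro mult_mono) auto
  then have "\<psi>^2 \<le> (norm (1 - of_real t * ee \<psi>))^2" using n2
    by (simp add: add_increasing)
  then have "\<bar>\<psi>\<bar>^2 \<le> (norm (1 - of_real t * ee \<psi>))^2" by simp
  then show ?thesis by (rule power2_le_imp_le) simp
qed

lemma minor_far:
  assumes th: "\<theta> \<in> minor_arcs A X" and m: "1 \<le> m" and mQ: "real m \<le> (ln X) powr A" and X: "X > 0"
  shows "(ln X) powr A / X \<le> \<bar>real m * \<theta> - of_int k\<bar>"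
proof (rule ccontr)
  define Q where "Q = (ln X) powr A"
  assume "\<not> (ln X) powr A / X \<le> \<bar>real m * \<theta> - of_int k\<bar>"
  then have close: "\<bar>real m * \<theta> - of_int k\<bar> < Q / X" by (simp add: Q_def)
  define g where "g = gcd k (int m)"
  have g0: "g > 0" using m by (simp add: g_def)
  define q' where "q' = int m div g"
  define a0 where "a0 = k div g"
  have mq: "int m = q' * g" by (simp add: q'_def g_def)
  have ka: "k = a0 * g" by (simp add: a0_def g_def)
  have "0 < q' * g" using mq m by simp
  then have q'0: "q' > 0" using g0 by (simp add: zero_less_mult_iff)
  have "q' * 1 \<le> q' * g" using q'0 g0 by (intro mult_left_mono) auto
  then have q'm: "q' \<le> int m" using mq by simp
  have cop0: "coprime a0 q'" unfolding a0_def q'_def g_def using m by (intro div_gcd_coprime) auto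
  have eq1: "\<theta> - of_int a0 / of_int q' = (real m * \<theta> - of_int k) / real m"
  proof -
    have "real m = of_int q' * of_int g" using mq by (metis of_int_mult of_int_of_nat_eq)
    moreover have "real_of_int k = of_int a0 * of_int g" using ka by simp
    ultimately show ?thesis using g0 q'0 m by (simp add: field_simps)
  qed
  have "\<bar>\<theta> - of_int a0 / of_int q'\<bar> < Q / X / real m"
  proof -
    have "\<bar>real m * \<theta> - of_int k\<bar> / real m < Q / X / real m"
      using close m by (intro divide_strict_right_mono) auto
    then show ?thesis using m by (simp add: eq1)
  qed
  also have "\<dots> \<le> Q / (X * of_int q')"
  proof -
    have Q0: "Q \<ge> 0" by (simp add: Q_def)
    have "real_of_int q' \<le> real m" using q'm by linarith
    then have "X * of_int q' \<le> X * real m" using X by simp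
    then show ?thesis using Q0 X q'0 by (simp add: divide_divide_eq_left mult.commute divide_left_mono)
  qed
  finally have close2: "\<bar>\<theta> - of_int a0 / of_int q'\<bar> < Q / (X * of_int q')" .
  define q where "q = nat q'"
  define a where "a = nat ((a0 - 1) mod q') + 1"
  define kk where "kk = (a0 - int a) div q'"
  have qq: "int q = q'" using q'0 by (simp add: q_def)
  have a1: "1 \<le> a" by (simp add: a_def)
  have aq: "a \<le> q"
  proof -
    have h: "(a0 - 1) mod q' < q'" "0 \<le> (a0 - 1) mod q'" using q'0 by simp_all
    then have "nat ((a0 - 1) mod q') < nat q'" by (simp add: nat_less_eq_zless)
    then have "Suc (nat ((a0 - 1) mod q')) \<le> nat q'" by (rule Suc_leI)
    then show ?thesis unfolding a_def q_def by simp
  qed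
  have amod: "int a mod q' = a0 mod q'"
  proof -
    have "int a = (a0 - 1) mod q' + 1" using q'0 by (simp add: a_def)
    then have "int a mod q' = ((a0 - 1) mod q' + 1) mod q'" by simp
    also have "\<dots> = (a0 - 1 + 1) mod q'" by (simp add: mod_add_left_eq)
    finally show ?thesis by simp
  qed
  have kkq: "a0 = int a + kk * q'"
  proof -
    have "q' dvd (int a - a0)" using amod by (simp add: mod_eq_dvd_iff)
    then have "q' dvd (a0 - int a)" by (simp add: dvd_diff_commute)
    then show ?thesis by (simp add: kk_def)
  qed
  have copa: "coprime a q"
  proof -
    have "coprime (a0 mod q') q'" using cop0 q'0 by simp
    then have "coprime (int a mod q') q'" by (simp add: amod)
    then have "coprime (int a) q'" using q'0 by simp
    then show ?thesis by (simp add: qq[symmetric])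
  qed
  have "\<theta> - real a / real q - of_int kk = \<theta> - of_int a0 / of_int q'"
  proof -
    have "real_of_int a0 = real a + of_int kk * of_int q'" using kkq by (metis of_int_add of_int_mult of_int_of_nat_eq)
    moreover have "real q = of_int q'" using qq by (metis of_int_of_nat_eq)
    ultimately show ?thesis using q'0 by (simp add: field_simps)
  qed
  moreover have "real q = of_int q'" using qq by (metis of_int_of_nat_eq)
  ultimately have "\<bar>\<theta> - real a / real q - of_int kk\<bar> < delta_q A X q"
    using close2 by (simp add: delta_q_def Q_def mult.commute)
  moreover have "real q \<le> (ln X) powr A"
  proof -
    have "real q \<le> real m" using qq q'm by linarith
    then show ?thesis using mQ by simp
  qed
  ultimately have "\<theta> \<in> major_arcs A X" using a1 aq copa unfolding major_arcs_def by blast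
  then show False using th by (simp add: minor_arcs_def)
qed

lemma ratio_bound1:
  fixes y :: real assumes "y > 0"
  shows "exp (-y) / (1 - exp (-y)) \<le> 1 / y"
proof -
  have e: "exp (-y) < 1" using assms by simp
  have "1 + y \<le> exp y" by (rule exp_ge_add_one_self)
  then have "exp (-y) * (1 + y) \<le> exp (-y) * exp y" by (intro mult_left_mono) auto
  then have "exp (-y) * (1 + y) \<le> 1" by (simp add: exp_minus)
  then have "exp (-y) * y \<le> 1 - exp (-y)" by (simp add: algebra_simps)
  then show ?thesis using e assms by (simp add: field_simps)
qed

lemma G_bound:
  fixes X A \<theta> :: real and m :: nat
  defines "z \<equiv> of_real (exp (-1 / X)) * ee \<theta>"
  defines "Q \<equiv> (ln X) powr A"
  assumes X: "X > 0" and Qpos: "Q > 0" and QX: "Q \<le> X" and th: "\<theta> \<in> minor_arcs A X" and m: "1 \<le> m"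
  shows "norm (z^m / (1 - z^m)) \<le> X * real m powr (-3/4) * Q powr (-1/4)"
proof -
  define t where "t = exp (- (real m / X))"
  have zm: "z^m = of_real t * ee (real m * \<theta>)"
  proof -
    have "exp (-1 / X) ^ m = exp (real m * (-1 / X))" by (rule exp_of_nat_mult[symmetric])
    also have "real m * (-1 / X) = - (real m / X)" by simp
    finally have "exp (-1 / X) ^ m = t" by (simp add: t_def)
    then have "(of_real (exp (-1 / X)) :: complex) ^ m = of_real t" by (metis of_real_power)
    then show ?thesis by (simp add: z_def power_mult_distrib ee_power)
  qed
  have t0: "0 < t" and t1: "t < 1" using X m by (auto simp: t_def)
  have nzm: "norm (z^m) = t" using t0 by (simp add: zm norm_mult)
  have rat: "norm (z^m / (1 - z^m)) = t / norm (1 - z^m)" by (simp add: norm_divide nzm)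
  have b1: "norm (z^m / (1 - z^m)) \<le> X / real m"
  proof -
    have "1 - t \<le> norm (1 - z^m)" using norm_triangle_ineq2[of 1 "z^m"] by (simp add: nzm)
    then have "t / norm (1 - z^m) \<le> t / (1 - t)" using t0 t1
      by (intro divide_left_mono mult_pos_pos) auto
    also have "\<dots> \<le> 1 / (real m / X)" unfolding t_def using X m by (intro ratio_bound1) auto
    finally show ?thesis using rat by simp
  qed
  show ?thesis
  proof (cases "real m \<le> Q")
    case True
    define k where "k = round (real m * \<theta>)"
    define \<psi> where "\<psi> = real m * \<theta> - of_int k"
    have psi: "\<bar>\<psi>\<bar> \<le> 1/2" using of_int_round_abs_le[of "real m * \<theta>"] by (simp add: \<psi>_def k_def abs_minus_commute)
    have eepsi: "ee (real m * \<theta>) = ee \<psi>" using ee_int[of \<psi> k] by (simp add: \<psi>_def)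
    have tge: "exp (-1) \<le> t" unfolding t_def using True QX X by simp
    have far: "Q / X \<le> \<bar>\<psi>\<bar>" unfolding \<psi>_def Q_def using minor_far[OF th m _ X] True by (simp add: Q_def)
    have "Q / X \<le> norm (1 - z^m)" using far norm_one_minus_ee[OF tge psi] by (simp add: zm eepsi)
    moreover have "0 < Q / X" using Qpos X by simp
    ultimately have "t / norm (1 - z^m) \<le> t / (Q / X)" using t0
      by (intro divide_left_mono mult_pos_pos) auto
    also have "\<dots> \<le> 1 / (Q / X)" using t1 Qpos X by (intro divide_right_mono) auto
    also have "\<dots> = X * Q powr (-1)" using Qpos by (simp add: powr_minus_divide)
    also have "Q powr (-1) = Q powr (-3/4) * Q powr (-1/4)" using Qpos by (simp add: powr_add[symmetric])
    also have "Q powr (-3/4) \<le> real m powr (-3/4)" using True m by (intro powr_mono2') auto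
    finally show ?thesis using rat X Qpos by (simp add: mult_left_mono mult_right_mono mult.assoc)
  next
    case False
    have "X / real m = X * real m powr (-1)" using m by (simp add: powr_minus_divide)
    also have "real m powr (-1) = real m powr (-3/4) * real m powr (-1/4)" using m by (simp add: powr_add[symmetric])
    also have "real m powr (-1/4) \<le> Q powr (-1/4)" using False Qpos by (intro powr_mono2') auto
    finally show ?thesis using b1 X m by (simp add: mult_left_mono mult.assoc)
  qed
qed

lemma ev_Q: fixes A :: real assumes "A > 0" shows "eventually (\<lambda>X. (ln X) powr A \<le> X) at_top"
  using assms by real_asymp

definition S2c :: real where "S2c = infsum (\<lambda>d::nat. real d powr (-3/2)) {1..}"
definition S1c :: real where "S1c = (\<Sum>j. real (Suc j) powr (-7/4))"

lemma S2c_has_sum: "((\<lambda>d::nat. real d powr (-3/2)) has_sum S2c) {1..}"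
proof -
  have "summable (\<lambda>n. real n powr (-3/2))" by (simp add: summable_real_powr_iff)
  then have "(\<lambda>n. real n powr (-3/2)) summable_on UNIV" by (intro norm_summable_imp_summable_on) simp
  then have "(\<lambda>n. real n powr (-3/2)) summable_on {1..}" by (rule summable_on_subset_banach) simp
  then show ?thesis by (simp add: S2c_def has_sum_infsum)
qed

lemma S1c_summable: "summable (\<lambda>j. real (Suc j) powr (-7/4))"
proof -
  have "summable (\<lambda>n. real n powr (-7/4))" by (simp add: summable_real_powr_iff)
  then show ?thesis using summable_Suc_iff[of "\<lambda>n. real n powr (-7/4)"] by simp
qed

lemma S_nonneg: "0 \<le> S1c" "0 \<le> S2c"
proof -
  show "0 \<le> S1c" unfolding S1c_def using S1c_summable by (intro suminf_nonneg) auto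
  show "0 \<le> S2c" using S2c_has_sum by (rule has_sum_nonneg) simp
qed

lemma T_bound:
  fixes w :: complex and c :: real
  assumes w: "norm w < 1" and c: "c \<ge> 0"
    and b: "\<And>d. d \<ge> 1 \<Longrightarrow> norm (w^(d\<^sup>2) / (1 - w^(d\<^sup>2))) \<le> c * real d powr (-3/2)"
  shows "norm (\<Sum>n. of_int \<bar>moebius (Suc n)\<bar> * w^(Suc n)) \<le> c * S2c"
proof (rule norm_infsum_le[OF T_identity[OF w] has_sum_cmult_right[OF S2c_has_sum]])
  fix d :: nat assume d: "d \<in> {1..}"
  have "norm (of_int (moebius d) * (w^(d\<^sup>2) / (1 - w^(d\<^sup>2)))) = \<bar>moebius d\<bar> * norm (w^(d\<^sup>2) / (1 - w^(d\<^sup>2)))"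
    by (subst norm_mult) simp
  also have "\<dots> \<le> 1 * norm (w^(d\<^sup>2) / (1 - w^(d\<^sup>2)))"
    by (intro mult_right_mono) (auto simp: moebius_def)
  also have "\<dots> \<le> c * real d powr (-3/2)" using b d by simp
  finally show "norm (of_int (moebius d) * (w^(d\<^sup>2) / (1 - w^(d\<^sup>2)))) \<le> c * real d powr (-3/2)" .
qed

theorem lemma6p8:
  fixes A :: real
  assumes "A > 0"
  shows "\<exists>C X0. \<forall>X \<ge> X0. \<forall>\<theta> \<in> minor_arcs A X.
           norm (Phi_absmu (of_real (exp (-1 / X)) * ee \<theta>)) \<le> C * X * (ln X) powr (10 - A / 4)"
proof -
  have "eventually (\<lambda>X. (ln X) powr A \<le> X \<and> X \<ge> 3) at_top"
    using ev_Q[OF assms] eventually_ge_at_top[of 3] by (rule eventually_conj)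
  then obtain X0 where X0: "\<And>X. X \<ge> X0 \<Longrightarrow> (ln X) powr A \<le> X \<and> X \<ge> 3"
    by (auto simp: eventually_at_top_linorder)
  have main: "norm (Phi_absmu (of_real (exp (-1 / X)) * ee \<theta>)) \<le> (S1c * S2c) * X * (ln X) powr (10 - A / 4)"
    if XX: "X \<ge> X0" and th: "\<theta> \<in> minor_arcs A X" for X \<theta>
  proof -
    define Q where "Q = (ln X) powr A"
    define z where "z = of_real (exp (-1 / X)) * ee \<theta>"
    have X3: "X \<ge> 3" and QX: "Q \<le> X" using X0[OF XX] by (auto simp: Q_def)
    have X: "X > 0" using X3 by simp
    have lnX: "ln X \<ge> 1"
    proof -
      have "exp 1 \<le> (3::real)" using exp_le by simp
      also have "\<dots> \<le> X" by (rule X3)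
      finally show ?thesis using X by (simp add: ln_ge_iff)
    qed
    have Q1: "Q \<ge> 1" unfolding Q_def using lnX assms by (intro ge_one_powr_ge_zero) auto
    then have Qpos: "Q > 0" by simp
    have nz: "norm z < 1" using X by (simp add: z_def norm_mult)
    define K where "K = X * Q powr (-1/4) * S2c"
    have K0: "K \<ge> 0" using X S_nonneg by (simp add: K_def)
    have inner: "norm (\<Sum>n. of_int \<bar>moebius (Suc n)\<bar> / of_nat (Suc j) * z ^ (Suc j * Suc n))
                 \<le> K * real (Suc j) powr (-7/4)" for j
    proof -
      define w where "w = z ^ Suc j"
      have "norm w = norm z ^ Suc j" unfolding w_def by (rule norm_power)
      also have "\<dots> < 1" using nz by (subst power_less_one_iff) auto
      finally have nw: "norm w < 1" .
      have summ: "summable (\<lambda>n. of_int \<bar>moebius (Suc n)\<bar> * w^(Suc n))"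
      proof (rule summable_comparison_test')
        show "summable (\<lambda>n. norm w ^ Suc n)" using nw by (simp add: summable_geometric)
        fix n :: nat
        have "norm (of_int \<bar>moebius (Suc n)\<bar> * w^(Suc n)) = \<bar>moebius (Suc n)\<bar> * norm w ^ Suc n"
          by (simp add: norm_mult norm_power)
        also have "\<dots> \<le> 1 * norm w ^ Suc n" by (intro mult_right_mono) (auto simp: moebius_def)
        finally show "norm (of_int \<bar>moebius (Suc n)\<bar> * w^(Suc n)) \<le> norm w ^ Suc n" by simp
      qed
      have eq: "(\<Sum>n. of_int \<bar>moebius (Suc n)\<bar> / of_nat (Suc j) * z ^ (Suc j * Suc n))
               = (\<Sum>n. of_int \<bar>moebius (Suc n)\<bar> * w^(Suc n)) / of_nat (Suc j)"
      proof -
        have fe: "(\<lambda>n. of_int \<bar>moebius (Suc n)\<bar> / of_nat (Suc j) * z ^ (Suc j * Suc n))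
            = (\<lambda>n. of_int \<bar>moebius (Suc n)\<bar> * w^(Suc n) / of_nat (Suc j))"
          by (simp only: w_def power_mult times_divide_eq_left)
        show ?thesis unfolding fe by (rule suminf_divide[OF summ])
      qed
      have cj: "X * Q powr (-1/4) * real (Suc j) powr (-3/4) \<ge> 0" using X by simp
      have Tb: "norm (\<Sum>n. of_int \<bar>moebius (Suc n)\<bar> * w^(Suc n)) \<le> (X * Q powr (-1/4) * real (Suc j) powr (-3/4)) * S2c"
      proof (rule T_bound[OF nw cj])
        fix d :: nat assume d: "d \<ge> 1"
        have "0 < Suc j * d\<^sup>2" using d by simp
        then have m1: "1 \<le> Suc j * d\<^sup>2" by linarith
        have wz: "w^(d\<^sup>2) = z^(Suc j * d\<^sup>2)" unfolding w_def by (rule power_mult[symmetric])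
        note Gb = G_bound[OF X Qpos[unfolded Q_def] QX[unfolded Q_def] th m1]
        have "norm (w^(d\<^sup>2) / (1 - w^(d\<^sup>2))) \<le> X * real (Suc j * d\<^sup>2) powr (-3/4) * Q powr (-1/4)"
          unfolding wz z_def Q_def by (rule Gb)
        also have "real (Suc j * d\<^sup>2) powr (-3/4) = real (Suc j) powr (-3/4) * real d powr (-3/2)"
        proof -
          have "real (Suc j * d\<^sup>2) powr (-3/4) = real (Suc j) powr (-3/4) * (real d powr 2) powr (-3/4)"
          proof -
            have "real (Suc j * d\<^sup>2) = real (Suc j) * real d powr 2"
              using d by (simp add: powr_realpow algebra_simps)
            then show ?thesis using d by (simp only: powr_mult of_nat_0_le_iff powr_ge_zero)
          qed
          also have "(real d powr 2) powr (-3/4) = real d powr (-3/2)" by (subst powr_powr) simp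
          finally show ?thesis .
        qed
        finally show "norm (w^(d\<^sup>2) / (1 - w^(d\<^sup>2))) \<le> X * Q powr (-1/4) * real (Suc j) powr (-3/4) * real d powr (-3/2)"
          by (simp add: algebra_simps)
      qed
      have "norm (\<Sum>n. of_int \<bar>moebius (Suc n)\<bar> / of_nat (Suc j) * z ^ (Suc j * Suc n))
            = norm (\<Sum>n. of_int \<bar>moebius (Suc n)\<bar> * w^(Suc n)) / real (Suc j)"
        unfolding eq norm_divide by (simp only: norm_of_nat)
      also have "\<dots> \<le> (X * Q powr (-1/4) * real (Suc j) powr (-3/4)) * S2c / real (Suc j)"
        using Tb by (intro divide_right_mono) auto
      also have "\<dots> = K * (real (Suc j) powr (-3/4) / real (Suc j))" by (simp add: K_def)
      also have "real (Suc j) powr (-3/4) / real (Suc j) = real (Suc j) powr (-7/4)"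
      proof -
        have "real (Suc j) powr (-3/4) / real (Suc j) = real (Suc j) powr (-3/4) * real (Suc j) powr (-1)"
          by (simp add: powr_minus_divide)
        also have "\<dots> = real (Suc j) powr ((-3/4) + (-1))" by (simp only: powr_add)
        also have "(-3/4) + (-1) = (-7/4::real)" by simp
        finally show ?thesis .
      qed
      finally show ?thesis .
    qed
    have "norm (Phi_absmu z) \<le> (\<Sum>j. K * real (Suc j) powr (-7/4))"
      unfolding Phi_absmu_def
      by (rule norm_suminf_le[OF inner]) (intro summable_mult S1c_summable)
    also have "\<dots> = K * S1c" unfolding S1c_def by (rule suminf_mult[OF S1c_summable])
    also have "\<dots> = (S1c * S2c) * X * Q powr (-1/4)" by (simp add: K_def algebra_simps)
    also have "Q powr (-1/4) = (ln X) powr (- (A/4))" using lnX by (simp add: Q_def powr_powr)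
    also have "(ln X) powr (- (A/4)) \<le> (ln X) powr (10 - A/4)" using lnX by (intro powr_mono) auto
    finally show ?thesis using S_nonneg X by (simp add: z_def mult_left_mono)
  qed
  show ?thesis by (intro exI[of _ "S1c * S2c"] exI[of _ X0] allI impI ballI main)
qed

end
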